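(* Let $V(1),\dots,V(T)\in\mathbb R^p$ and $0=\nu_0<\nu_1<\dots<\nu_M=T$ with $M\ge2$ be such that $V(\nu_m+1)=\dots=V(\nu_{m+1})$ for all $m=0,\dots,M-1$. For $t\in\{1,\dots,T-1\}$ let \[ \widetilde V(t)=\sqrt{\frac{T-t}{Tt}}\sum_{r=1}^tV(r)-\sqrt{\frac{t}{T(T-t)}}\sum_{r=t+1}^TV(r). \] Then the maximum of $\|\widetilde V(t)\|^2$ over $t\in\{1,\dots,T-1\}$ is attained at a change point $\nu_m$, $1\le m\le M-1$; and for each $m=1,\dots,M$, restricted to integers $t\in[\nu_{m-1},\nu_m]\cap\{1,\dots,T-1\}$, the function $t\mapsto\|\widetilde V(t)\|^2$ is either monotone or first decreases and then increases.
   Context: $\|\cdot\|$ is the Euclidean norm. The points $\nu_1,\dots,\nu_{M-1}$ are the change points of the piecewise constant sequence $V$. *)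

theory Defs
  imports "HOL-Analysis.Analysis"
begin

definition Vtilde :: "(nat \<Rightarrow> real ^ 'p) \<Rightarrow> nat \<Rightarrow> nat \<Rightarrow> real ^ 'p" where
  "Vtilde V T t =
     sqrt ((real T - real t) / (real T * real t)) *\<^sub>R (\<Sum>r\<in>{1..t}. V r)
   - sqrt (real t / (real T * (real T - real t))) *\<^sub>R (\<Sum>r\<in>{t+1..T}. V r)"

definition decreasing_on :: "nat set \<Rightarrow> (nat \<Rightarrow> real) \<Rightarrow> bool" where
  "decreasing_on S f \<longleftrightarrow> monotone_on S (\<le>) (\<ge>) f"

definition dec_then_inc_on :: "nat set \<Rightarrow> (nat \<Rightarrow> real) \<Rightarrow> bool" where
  "dec_then_inc_on S f \<longleftrightarrow>
     (\<exists>s\<in>S. decreasing_on {t\<in>S. t \<le> s} f \<and> mono_on {t\<in>S. s \<le> t} f)"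

end

theory Submission
  imports Defs
begin

lemma quasi_aux:
  fixes A B :: "'a::real_inner" and x y z c T :: real
  assumes "x \<le> y" "y \<le> z" "x < z" "0 \<le> c" "0 \<le> T"
    and hx: "(norm (A + x *\<^sub>R B))\<^sup>2 \<le> c*T*x*(T-x)"
    and hz: "(norm (A + z *\<^sub>R B))\<^sup>2 \<le> c*T*z*(T-z)"
  shows "(norm (A + y *\<^sub>R B))\<^sup>2 \<le> c*T*y*(T-y)"
proof -
  have e: "(norm (A + w *\<^sub>R B))\<^sup>2 = inner A A + 2*w*(inner A B) + w\<^sup>2*(inner B B)" for w
    unfolding power2_norm_eq_inner
    by (simp add: inner_add_left inner_add_right inner_commute[of B A] algebra_simps power2_eq_square)
  define h where "h w = inner A A + 2*w*(inner A B) + w\<^sup>2*(inner B B) - c*T*w*(T-w)" for w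
  define K where "K = inner B B + c*T"
  have K0: "K \<ge> 0" unfolding K_def using assms by simp
  have id: "(z-x)*h y = (z-y)*h x + (y-x)*h z - K*(z-y)*(y-x)*(z-x)"
    unfolding h_def K_def by (simp add: algebra_simps power2_eq_square)
  have hx': "h x \<le> 0" using hx e[of x] unfolding h_def by simp
  have hz': "h z \<le> 0" using hz e[of z] unfolding h_def by simp
  have "(z-y)*h x \<le> 0" using hx' assms by (simp add: mult_nonneg_nonpos)
  moreover have "(y-x)*h z \<le> 0" using hz' assms by (simp add: mult_nonneg_nonpos)
  moreover have "K*(z-y)*(y-x)*(z-x) \<ge> 0" using K0 assms by simp
  ultimately have "(z-x)*h y \<le> 0" using id by linarith
  hence "h y \<le> 0" using assms by (simp add: mult_le_0_iff)
  thus ?thesis using e[of y] unfolding h_def by simp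
qed

lemma qc_shape:
  fixes S :: "nat set" and f :: "nat \<Rightarrow> real"
  assumes "finite S"
    and qc: "\<And>x y z. x\<in>S \<Longrightarrow> y\<in>S \<Longrightarrow> z\<in>S \<Longrightarrow> x<y \<Longrightarrow> y<z \<Longrightarrow> f y \<le> max (f x) (f z)"
  shows "mono_on S f \<or> dec_then_inc_on S f"
proof (cases "S = {}")
  case True thus ?thesis by (simp add: mono_on_def)
next
  case False
  have "Min (f ` S) \<in> f ` S" using assms False by simp
  then obtain s where s: "s \<in> S" "f s = Min (f ` S)" by auto
  have smin: "f s \<le> f t" if "t \<in> S" for t using s that assms by simp
  have d: "decreasing_on {t\<in>S. t \<le> s} f"
    unfolding decreasing_on_def monotone_on_def
  proof (intro ballI impI)
    fix u v assume u: "u \<in> {t\<in>S. t \<le> s}" and v: "v \<in> {t\<in>S. t \<le> s}" and uv: "u \<le> v"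
    show "f v \<le> f u"
    proof (cases "u = v \<or> v = s")
      case True thus ?thesis using smin u by auto
    next
      case False
      hence "u < v" "v < s" using uv v by auto
      hence "f v \<le> max (f u) (f s)" using qc[of u v s] u v s by auto
      thus ?thesis using smin u by auto
    qed
  qed
  have i: "mono_on {t\<in>S. s \<le> t} f"
    unfolding mono_on_def
  proof (intro allI impI)
    fix u v assume h: "u \<in> {t\<in>S. s \<le> t} \<and> v \<in> {t\<in>S. s \<le> t} \<and> u \<le> v"
    show "f u \<le> f v"
    proof (cases "u = v \<or> u = s")
      case True thus ?thesis using smin h by auto
    next
      case False
      hence "s < u" "u < v" using h by auto
      hence "f u \<le> max (f s) (f v)" using qc[of s u v] h s by auto
      thus ?thesis using smin h by auto
    qed
  qed
  show ?thesis unfolding dec_then_inc_on_def using d i s by blast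
qed


lemma Vtilde_0: "Vtilde V T 0 = 0" by (simp add: Vtilde_def)
lemma Vtilde_T: "Vtilde V T T = 0" by (simp add: Vtilde_def)

lemma L1:
  fixes V :: "nat \<Rightarrow> real ^ 'p"
  assumes "t \<le> T"
  shows "(norm (Vtilde V T t))\<^sup>2 * (real T * real t * (real T - real t))
       = (norm (real T *\<^sub>R (\<Sum>r\<in>{1..t}. V r) - real t *\<^sub>R (\<Sum>r\<in>{1..T}. V r)))\<^sup>2"
proof (cases "t = 0 \<or> t = T")
  case True thus ?thesis by auto
next
  case False
  hence t0: "0 < t" "t < T" using assms by auto
  define D where "D = real T * real t * (real T - real t)"
  have D0: "D > 0" unfolding D_def using t0 by simp
  have sD: "sqrt D > 0" using D0 by simp
  have a1: "sqrt ((real T - real t) / (real T * real t)) = (real T - real t) / sqrt D"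
  proof -
    have "(real T - real t) / (real T * real t) = (real T - real t)^2 / D"
      unfolding D_def using t0 by (simp add: field_simps power2_eq_square)
    thus ?thesis using t0 by (simp add: real_sqrt_divide)
  qed
  have a2: "sqrt (real t / (real T * (real T - real t))) = real t / sqrt D"
  proof -
    have "real t / (real T * (real T - real t)) = (real t)^2 / D"
      unfolding D_def using t0 by (simp add: field_simps power2_eq_square)
    thus ?thesis using t0 by (simp add: real_sqrt_divide)
  qed
  have sp: "(\<Sum>r\<in>{1..T}. V r) = (\<Sum>r\<in>{1..t}. V r) + (\<Sum>r\<in>{t+1..T}. V r)"
    using sum.ub_add_nat[of 1 t V "T - t"] t0 by simp
  define Sa where "Sa = (\<Sum>r\<in>{1..t}. V r)"
  define Sb where "Sb = (\<Sum>r\<in>{t+1..T}. V r)"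
  have e1: "Vtilde V T t = ((real T - real t) / sqrt D) *\<^sub>R Sa - (real t / sqrt D) *\<^sub>R Sb"
    unfolding Vtilde_def Sa_def Sb_def by (simp only: a1 a2)
  have e2: "(real T - real t) *\<^sub>R Sa - real t *\<^sub>R Sb = real T *\<^sub>R Sa - real t *\<^sub>R (Sa + Sb)"
    by (simp add: scaleR_diff_left scaleR_add_right)
  have "Vtilde V T t = (1 / sqrt D) *\<^sub>R ((real T - real t) *\<^sub>R Sa - real t *\<^sub>R Sb)"
    unfolding e1 scaleR_diff_right scaleR_scaleR by simp
  hence "Vtilde V T t = (1 / sqrt D) *\<^sub>R (real T *\<^sub>R Sa - real t *\<^sub>R (Sa + Sb))"
    unfolding e2 .
  hence "(norm (Vtilde V T t))\<^sup>2 = (norm (real T *\<^sub>R Sa - real t *\<^sub>R (Sa + Sb)))\<^sup>2 / D"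
    using sD D0 by (simp add: power_divide)
  thus ?thesis using D0 sp unfolding D_def[symmetric] Sa_def[symmetric] Sb_def[symmetric] by simp
qed

lemma nu_le:
  assumes nu_mono: "\<And>m. m < M \<Longrightarrow> nu m < (nu (Suc m)::nat)"
  shows "i \<le> j \<Longrightarrow> j \<le> M \<Longrightarrow> nu i \<le> nu j"
proof (induction j)
  case 0 thus ?case by simp
next
  case (Suc j)
  show ?case
  proof (cases "i = Suc j")
    case True thus ?thesis by simp
  next
    case False
    hence "nu i \<le> nu j" using Suc by simp
    also have "nu j < nu (Suc j)" using nu_mono Suc by simp
    finally show ?thesis by simp
  qed
qed

lemma seg_lin:
  fixes V :: "nat \<Rightarrow> real ^ 'p"
  assumes "a \<le> t" "t \<le> b" and pw: "\<And>u. a + 1 \<le> u \<Longrightarrow> u \<le> b \<Longrightarrow> V u = V b"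
  shows "(\<Sum>r\<in>{1..t}. V r) = (\<Sum>r\<in>{1..a}. V r) + (real t - real a) *\<^sub>R V b"
proof -
  have "a + k \<le> b \<Longrightarrow> (\<Sum>r\<in>{1..a+k}. V r) = (\<Sum>r\<in>{1..a}. V r) + real k *\<^sub>R V b" for k
  proof (induction k)
    case 0 thus ?case by simp
  next
    case (Suc k)
    have v: "V (a + Suc k) = V b" by (rule pw) (use Suc.prems in auto)
    have "(\<Sum>r\<in>{1..a + Suc k}. V r) = (\<Sum>r\<in>{1..a+k}. V r) + V (a + Suc k)" by simp
    also have "\<dots> = (\<Sum>r\<in>{1..a}. V r) + real k *\<^sub>R V b + V b"
      unfolding v using Suc by simp
    also have "\<dots> = (\<Sum>r\<in>{1..a}. V r) + real (Suc k) *\<^sub>R V b"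
      by (simp add: scaleR_add_left)
    finally show ?case .
  qed
  from this[of "t - a"] assms(1,2) show ?thesis by (simp add: of_nat_diff)
qed

theorem proposition1:
  fixes V :: "nat \<Rightarrow> real ^ 'p" and T M :: nat and nu :: "nat \<Rightarrow> nat"
  assumes M2: "M \<ge> 2"
    and nu0: "nu 0 = 0" and nuM: "nu M = T"
    and nu_mono: "\<And>m. m < M \<Longrightarrow> nu m < nu (Suc m)"
    and piecewise: "\<And>m t. m < M \<Longrightarrow> nu m + 1 \<le> t \<Longrightarrow> t \<le> nu (Suc m) \<Longrightarrow> V t = V (nu (Suc m))"
  shows "(\<exists>m\<in>{1..M-1}. \<forall>t\<in>{1..T-1}. (norm (Vtilde V T t))\<^sup>2 \<le> (norm (Vtilde V T (nu m)))\<^sup>2)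
       \<and> (\<forall>m\<in>{1..M}.
            let S = {t. nu (m-1) \<le> t \<and> t \<le> nu m \<and> 1 \<le> t \<and> t \<le> T - 1};
                f = (\<lambda>t. (norm (Vtilde V T t))\<^sup>2)
            in mono_on S f \<or> decreasing_on S f \<or> dec_then_inc_on S f)"
proof -
  define f where "f = (\<lambda>t. (norm (Vtilde V T t))\<^sup>2)"
  define Sm where "Sm = (\<lambda>t. (\<Sum>r\<in>{1..t}. V r))"
  define W where "W = Sm T"
  have f0: "f t \<ge> 0" for t unfolding f_def by simp
  have fD: "f t * (real T * real t * (real T - real t)) = (norm (real T *\<^sub>R Sm t - real t *\<^sub>R W))\<^sup>2"
    if "t \<le> T" for t unfolding f_def Sm_def W_def using L1[OF that] by simp
  have KEY: "f y \<le> max (f x) (f z)"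
    if m: "m \<in> {1..M}" and xy: "nu (m-1) \<le> x" "x \<le> y" "y \<le> z" "z \<le> nu m" "x < z" "0 < y" "y < T"
    for m x y z
  proof -
    define a where "a = nu (m-1)"
    define b where "b = nu m"
    have bT: "b \<le> T" unfolding b_def using nu_le[of M nu m M] nu_mono m nuM by simp
    have pw: "V u = V b" if "a + 1 \<le> u" "u \<le> b" for u
    proof -
      have "m - 1 < M" "Suc (m-1) = m" using m by auto
      thus ?thesis using piecewise[of "m-1" u] that unfolding a_def b_def by simp
    qed
    define A where "A = real T *\<^sub>R Sm a - (real a * real T) *\<^sub>R V b"
    define B where "B = real T *\<^sub>R V b - W"
    have lin: "real T *\<^sub>R Sm t - real t *\<^sub>R W = A + real t *\<^sub>R B" if "a \<le> t" "t \<le> b" for t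
    proof -
      have e: "Sm t = Sm a + (real t - real a) *\<^sub>R V b"
        unfolding Sm_def using seg_lin[of a t b V, OF that pw] by simp
      show ?thesis unfolding A_def B_def e
        by (simp add: algebra_simps scaleR_diff_left scaleR_diff_right)
    qed
    define c where "c = max (f x) (f z)"
    have c0: "c \<ge> 0" unfolding c_def using f0[of x] by simp
    have qb: "(norm (A + real t *\<^sub>R B))\<^sup>2 \<le> c * real T * real t * (real T - real t)"
      if "t = x \<or> t = z" for t
    proof -
      have t: "a \<le> t" "t \<le> b" using that xy unfolding a_def b_def by auto
      hence tT: "t \<le> T" using bT by simp
      have "(norm (A + real t *\<^sub>R B))\<^sup>2 = f t * (real T * real t * (real T - real t))"
        using fD[OF tT] lin[OF t] by simp
      also have "\<dots> \<le> c * (real T * real t * (real T - real t))"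
        apply (rule mult_right_mono)
        using that tT unfolding c_def by auto
      finally show ?thesis by (simp add: algebra_simps)
    qed
    have "(norm (A + real y *\<^sub>R B))\<^sup>2 \<le> c * real T * real y * (real T - real y)"
      apply (rule quasi_aux[of "real x" "real y" "real z"])
      using xy c0 qb by auto
    moreover have "(norm (A + real y *\<^sub>R B))\<^sup>2 = f y * (real T * real y * (real T - real y))"
      using fD[of y] lin[of y] xy unfolding a_def b_def by simp
    ultimately have "f y * (real T * real y * (real T - real y)) \<le> c * (real T * real y * (real T - real y))"
      by (simp add: algebra_simps)
    moreover have "real T * real y * (real T - real y) > 0" using xy by simp
    ultimately show ?thesis unfolding c_def by (metis mult_le_cancel_right_pos)
  qed
  have fz: "f 0 = 0" "f T = 0" unfolding f_def by (simp_all add: Vtilde_0 Vtilde_T)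
  have cover: "\<exists>m\<in>{1..M}. nu (m-1) \<le> t \<and> t \<le> nu m" if t: "t \<in> {1..T-1}" for t
  proof -
    have ex: "t \<le> nu M" using t nuM by auto
    hence "\<exists>m. t \<le> nu m" by blast
    then obtain m where tm: "t \<le> nu m" and lst: "\<And>k. k < m \<Longrightarrow> \<not> t \<le> nu k"
      using exists_least_iff[of "\<lambda>m. t \<le> nu m"] by blast
    have mM: "m \<le> M" using lst[of M] ex by (cases "M < m") auto
    have m0: "m \<noteq> 0" using tm t nu0 by (cases "m = 0") auto
    have "\<not> t \<le> nu (m-1)" using lst[of "m-1"] m0 by simp
    thus ?thesis using tm mM m0 by (intro bexI[of _ m]) auto
  qed
  have fin: "finite ((\<lambda>m. f (nu m)) ` {1..M-1})" by simp
  have ne: "(\<lambda>m. f (nu m)) ` {1..M-1} \<noteq> {}" using M2 by auto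
  obtain m0 where m0: "m0 \<in> {1..M-1}" "f (nu m0) = Max ((\<lambda>m. f (nu m)) ` {1..M-1})"
    using Max_in[OF fin ne] by auto
  have fnu: "f (nu i) \<le> f (nu m0)" if "i \<le> M" for i
  proof (cases "i = 0 \<or> i = M")
    case True thus ?thesis using fz nu0 nuM f0 by auto
  next
    case False
    hence "i \<in> {1..M-1}" using that by auto
    thus ?thesis using m0 Max_ge[OF fin] by auto
  qed
  have part1: "\<forall>t\<in>{1..T-1}. f t \<le> f (nu m0)"
  proof
    fix t assume t: "t \<in> {1..T-1}"
    obtain m where m: "m \<in> {1..M}" "nu (m-1) \<le> t" "t \<le> nu m" using cover[OF t] by blast
    have mm: "m - 1 < M" "Suc (m-1) = m" using m by auto
    have lt: "nu (m-1) < nu m" using nu_mono[OF mm(1)] mm(2) by simp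
    have "f t \<le> max (f (nu (m-1))) (f (nu m))"
      using KEY[of m "nu (m-1)" t "nu m"] m lt t by auto
    also have "\<dots> \<le> f (nu m0)" using fnu[of "m-1"] fnu[of m] m by auto
    finally show "f t \<le> f (nu m0)" .
  qed
  have part2: "mono_on S f \<or> decreasing_on S f \<or> dec_then_inc_on S f"
    if m: "m \<in> {1..M}" and S: "S = {t. nu (m-1) \<le> t \<and> t \<le> nu m \<and> 1 \<le> t \<and> t \<le> T - 1}" for m S
  proof -
    have "finite S" unfolding S by (rule finite_subset[of _ "{..nu m}"]) auto
    moreover have "f y \<le> max (f x) (f z)"
      if "x\<in>S" "y\<in>S" "z\<in>S" "x<y" "y<z" for x y z
      using KEY[of m x y z] m that unfolding S by auto
    ultimately have "mono_on S f \<or> dec_then_inc_on S f" by (rule qc_shape)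
    thus ?thesis by blast
  qed
  show ?thesis
    using part1 m0(1) part2 unfolding f_def Let_def by blast
qed

end
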